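(* Let $N, D$ be positive integers with $N \ge 2$, and let $\mathcal{G}$ be the complete graph on $N$ nodes. For any weight matrix $\mathbf{W} \in \mathbb{R}^{D\times D}$, the class $\mathcal{F}_{\mathcal{G},\mathbf{W}}$ of all maps $\hat f : \mathbb{R}^{N\times D} \to \mathbb{R}$ of the form $\hat f = \mathrm{MLP} \circ \mathcal{L}^{\mathrm{conv}}_{\mathcal{G},\mathbf{W}}$, where $\mathcal{L}^{\mathrm{conv}}_{\mathcal{G},\mathbf{W}}(\mathbf{X}) = \tilde{\mathbf{A}}\mathbf{X}\mathbf{W}$ and $\mathrm{MLP}$ ranges over all multilayer perceptrons $\mathbb{R}^{N\times D}\to\mathbb{R}$ with $\mathrm{SiLU}$ activation, is not a universal approximator in $\mathcal{C}(\mathbb{R}^{N\times D})$.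
   Context: $\mathrm{SiLU}(x) = x/(1+e^{-x})$, applied elementwise. $\tilde{\mathbf{A}} \in \mathbb{R}^{N\times N}$ is the degree-normalized adjacency matrix with self-loops: $\tilde{\mathbf{A}}_{ij} = 1/\sqrt{\deg(v_i)\deg(v_j)}$ if $v_i, v_j$ are adjacent or $i=j$, and $0$ otherwise, where degrees count the self-loop; for the complete graph every entry of $\tilde{\mathbf{A}}$ equals $1/N$. MLPs take the matrix input $\mathbf{X}$ (viewed as a vector in $\mathbb{R}^{ND}$) to a real number. $\mathcal{C}(\mathbb{R}^{N\times D})$ denotes the continuous functions $\mathbb{R}^{N\times D}\to\mathbb{R}$. A class $\mathcal{F} \subseteq \mathcal{C}(\mathbb{R}^{N\times D})$ is a universal approximator if for every continuous $f:\mathbb{R}^{N\times D}\to\mathbb{R}$, every $\varepsilon>0$ and every nonempty compact $K \subset \mathbb{R}^{N\times D}$ there is $\hat f \in \mathcal{F}$ with $\max_{\mathbf{X}\in K}|f(\mathbf{X}) - \hat f(\mathbf{X})| < \varepsilon$. *)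

theory Defs
  imports "HOL-Analysis.Analysis"
begin

definition silu :: "real \<Rightarrow> real" where
  "silu x = x / (1 + exp (- x))"

definition graph_deg :: "('n::finite \<Rightarrow> 'n \<Rightarrow> bool) \<Rightarrow> 'n \<Rightarrow> real" where
  "graph_deg E i = real (card {j. E i j \<or> j = i})"

definition norm_adj :: "('n::finite \<Rightarrow> 'n \<Rightarrow> bool) \<Rightarrow> real^'n^'n" where
  "norm_adj E = (\<chi> i j. if E i j \<or> i = j then 1 / sqrt (graph_deg E i * graph_deg E j) else 0)"

definition complete_graph :: "'n \<Rightarrow> 'n \<Rightarrow> bool" where
  "complete_graph i j = (i \<noteq> j)"

definition conv_layer :: "('n::finite \<Rightarrow> 'n \<Rightarrow> bool) \<Rightarrow> real^'d^'d \<Rightarrow> real^'d^'n \<Rightarrow> real^'d^'n" where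
  "conv_layer E W X = norm_adj E ** X ** W"

text \<open>Hidden-layer outputs of SiLU MLPs on inputs in R^(N x D) (flattened entries X\$i\$l).
  mlp_hidden k h: h X is the vector (h X 0, ..., h X (k-1)) of a hidden layer of width k.\<close>
inductive mlp_hidden :: "nat \<Rightarrow> (real^'d::finite^'n::finite \<Rightarrow> nat \<Rightarrow> real) \<Rightarrow> bool" where
  first: "mlp_hidden k (\<lambda>X j. silu ((\<Sum>i\<in>UNIV. \<Sum>l\<in>UNIV. A j i l * X$i$l) + b j))"
| step: "mlp_hidden m h \<Longrightarrow> mlp_hidden k (\<lambda>X j. silu ((\<Sum>i<m. A j i * h X i) + b j))"

definition mlp :: "(real^'d::finite^'n::finite \<Rightarrow> real) set" where
  "mlp = {(\<lambda>X. (\<Sum>i\<in>UNIV. \<Sum>l\<in>UNIV. c i l * X$i$l) + b0) | c b0. True}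
       \<union> {(\<lambda>X. (\<Sum>i<m. c i * h X i) + b0) | m h c b0. mlp_hidden m h}"

definition universal_approximator :: "('a::real_normed_vector \<Rightarrow> real) set \<Rightarrow> bool" where
  "universal_approximator F \<longleftrightarrow>
     (\<forall>f. continuous_on UNIV f \<longrightarrow>
        (\<forall>\<epsilon>>0. \<forall>K. compact K \<and> K \<noteq> {} \<longrightarrow>
           (\<exists>g\<in>F. \<forall>X\<in>K. \<bar>f X - g X\<bar> < \<epsilon>)))"

end

theory Submission
  imports Defs
begin

lemma deg_cg: "graph_deg (complete_graph :: 'n::finite \<Rightarrow> 'n \<Rightarrow> bool) i = real CARD('n)"
proof -
  have "{j. complete_graph i j \<or> j = i} = (UNIV :: 'n set)"
    by (auto simp: complete_graph_def)
  then show ?thesis by (simp add: graph_deg_def)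
qed

lemma adj_cg: "norm_adj (complete_graph :: 'n::finite \<Rightarrow> 'n \<Rightarrow> bool) $ i $ j = 1 / real CARD('n)"
proof -
  have "complete_graph i j \<or> i = j" by (auto simp: complete_graph_def)
  then show ?thesis by (simp add: norm_adj_def deg_cg)
qed

lemma conv_eq:
  fixes a b :: "'n::finite" and W :: "real^'d::finite^'d"
  shows "conv_layer (complete_graph :: 'n \<Rightarrow> 'n \<Rightarrow> bool) W (\<chi> i l. if i = a then 1 else 0)
       = conv_layer (complete_graph :: 'n \<Rightarrow> 'n \<Rightarrow> bool) W (\<chi> i l. if i = b then 1 else 0)"
proof -
  have "norm_adj (complete_graph :: 'n \<Rightarrow> 'n \<Rightarrow> bool) ** (\<chi> i l. if i = a then 1 else 0 :: real^'d^'n)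
      = norm_adj (complete_graph :: 'n \<Rightarrow> 'n \<Rightarrow> bool) ** (\<chi> i l. if i = b then 1 else 0)"
    by (simp add: matrix_matrix_mult_def adj_cg vec_eq_iff if_distrib sum.delta cong: if_cong)
  then show ?thesis by (simp add: conv_layer_def)
qed

theorem theorem1:
  fixes W :: "real^'d::finite^'d"
  assumes "CARD('n::finite) \<ge> 2"
  shows "\<not> universal_approximator
           {g \<circ> conv_layer (complete_graph :: 'n \<Rightarrow> 'n \<Rightarrow> bool) W | g. g \<in> mlp}"
proof
  assume U: "universal_approximator
           {g \<circ> conv_layer (complete_graph :: 'n \<Rightarrow> 'n \<Rightarrow> bool) W | g. g \<in> mlp}"
  obtain a b :: 'n where ab: "a \<noteq> b"
  proof -
    have "\<not> CARD('n) \<le> 1" using assms by simp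
    then have "\<exists>a b :: 'n. a \<noteq> b" using card_le_Suc0_iff_eq[of "UNIV :: 'n set"] by auto
    then show ?thesis using that by blast
  qed
  obtain l0 :: 'd where True by blast
  define X1 :: "real^'d^'n" where "X1 = (\<chi> i l. if i = a then 1 else 0)"
  define X2 :: "real^'d^'n" where "X2 = (\<chi> i l. if i = b then 1 else 0)"
  define f :: "real^'d^'n \<Rightarrow> real" where "f = (\<lambda>X. X $ a $ l0)"
  have cf: "continuous_on UNIV f" unfolding f_def
    by (intro continuous_intros)
  have "compact {X1, X2}" by simp
  then obtain h where h: "h \<in> {g \<circ> conv_layer (complete_graph :: 'n \<Rightarrow> 'n \<Rightarrow> bool) W | g. g \<in> mlp}"
    and hk: "\<forall>X\<in>{X1, X2}. \<bar>f X - h X\<bar> < 1/2"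
    using U cf unfolding universal_approximator_def
    by (metis (no_types, lifting) empty_not_insert half_gt_zero_iff zero_less_one)
  then obtain g where hg: "h = g \<circ> conv_layer (complete_graph :: 'n \<Rightarrow> 'n \<Rightarrow> bool) W" by blast
  have "h X1 = h X2" unfolding hg X1_def X2_def using conv_eq[of W a b] by simp
  moreover have "f X1 = 1" "f X2 = 0" using ab by (auto simp: f_def X1_def X2_def)
  ultimately show False using hk by auto
qed

end
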